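(* Let $G$ be a torsion-free group and $G'\le G$ a subgroup of finite index. Suppose $G$ acts on a simplicial tree $T$ and the induced action of $G'$ on $T$ is $\kappa$-acylindrical. Then the action of $G$ on $T$ is $\kappa$-acylindrical.
   Context: For a non-negative integer $\kappa$, an action of a group on a simplicial tree is $\kappa$-acylindrical if the pointwise stabiliser of every edge path of length at least $\kappa+1$ (number of edges) is trivial. *)

theory Defs
  imports "HOL-Algebra.Group_Action" "HOL-Algebra.Coset"
begin

definition simple_graph :: "'v set \<Rightarrow> ('v \<Rightarrow> 'v \<Rightarrow> bool) \<Rightarrow> bool" where
  "simple_graph V E \<longleftrightarrow>
     (\<forall>x y. E x y \<longrightarrow> x \<in> V \<and> y \<in> V) \<and> (\<forall>x y. E x y \<longrightarrow> E y x) \<and> (\<forall>x. \<not> E x x)"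

definition walk :: "'v set \<Rightarrow> ('v \<Rightarrow> 'v \<Rightarrow> bool) \<Rightarrow> 'v list \<Rightarrow> bool" where
  "walk V E p \<longleftrightarrow> p \<noteq> [] \<and> set p \<subseteq> V \<and> (\<forall>i. Suc i < length p \<longrightarrow> E (p ! i) (p ! Suc i))"

definition simplicial_tree :: "'v set \<Rightarrow> ('v \<Rightarrow> 'v \<Rightarrow> bool) \<Rightarrow> bool" where
  "simplicial_tree V E \<longleftrightarrow> simple_graph V E \<and>
     (\<forall>x\<in>V. \<forall>y\<in>V. \<exists>p. walk V E p \<and> hd p = x \<and> last p = y) \<and>
     \<not> (\<exists>p. walk V E p \<and> distinct p \<and> length p \<ge> 3 \<and> E (last p) (hd p))"

text \<open>An edge path (reduced, i.e. without backtracking; in a tree this means its vertices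
  are pairwise distinct) given by its vertex sequence; its length is the number of edges.\<close>
definition edge_path :: "'v set \<Rightarrow> ('v \<Rightarrow> 'v \<Rightarrow> bool) \<Rightarrow> 'v list \<Rightarrow> bool" where
  "edge_path V E p \<longleftrightarrow> walk V E p \<and> distinct p"

definition tree_action :: "('a, 'b) monoid_scheme \<Rightarrow> 'v set \<Rightarrow> ('v \<Rightarrow> 'v \<Rightarrow> bool) \<Rightarrow> ('a \<Rightarrow> 'v \<Rightarrow> 'v) \<Rightarrow> bool" where
  "tree_action G V E \<phi> \<longleftrightarrow> simplicial_tree V E \<and> group_action G V \<phi> \<and>
     (\<forall>g\<in>carrier G. \<forall>x\<in>V. \<forall>y\<in>V. E (\<phi> g x) (\<phi> g y) \<longleftrightarrow> E x y)"

text \<open>Pointwise stabiliser of a path (fixing all its vertices, hence all its edges).\<close>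
definition pointwise_stab :: "('a, 'b) monoid_scheme \<Rightarrow> ('a \<Rightarrow> 'v \<Rightarrow> 'v) \<Rightarrow> 'v list \<Rightarrow> 'a set" where
  "pointwise_stab G \<phi> p = {g \<in> carrier G. \<forall>v\<in>set p. \<phi> g v = v}"

definition acylindrical :: "nat \<Rightarrow> ('a, 'b) monoid_scheme \<Rightarrow> 'v set \<Rightarrow> ('v \<Rightarrow> 'v \<Rightarrow> bool) \<Rightarrow> ('a \<Rightarrow> 'v \<Rightarrow> 'v) \<Rightarrow> bool" where
  "acylindrical \<kappa> G V E \<phi> \<longleftrightarrow>
     (\<forall>p. edge_path V E p \<and> length p - 1 \<ge> \<kappa> + 1 \<longrightarrow> pointwise_stab G \<phi> p = {\<one>\<^bsub>G\<^esub>})"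

definition torsion_free :: "('a, 'b) monoid_scheme \<Rightarrow> bool" where
  "torsion_free G \<longleftrightarrow> (\<forall>g\<in>carrier G. \<forall>n::nat. n > 0 \<and> g [^]\<^bsub>G\<^esub> n = \<one>\<^bsub>G\<^esub> \<longrightarrow> g = \<one>\<^bsub>G\<^esub>)"

end

theory Submission
  imports Defs
begin

lemma power_in_subgroup:
  fixes G (structure)
  assumes G: "group G" and H: "subgroup H G" and fin: "finite (rcosets\<^bsub>G\<^esub> H)"
    and g: "g \<in> carrier G"
  shows "\<exists>n>0. g [^]\<^bsub>G\<^esub> (n::nat) \<in> H"
proof -
  interpret group G by (rule G)
  interpret subgroup H G by (rule H)
  let ?f = "\<lambda>i::nat. H #> g [^] i"
  have "range ?f \<subseteq> rcosets H"
    using g by (auto intro: rcosetsI)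
  hence "finite (range ?f)" using fin finite_subset by blast
  hence "\<not> inj ?f" using finite_imageD infinite_UNIV_nat by blast
  then obtain i j where ij: "i \<noteq> j" "?f i = ?f j" unfolding inj_def by blast
  have "\<exists>i j. i < j \<and> ?f i = ?f j"
  proof (cases "i < j")
    case True then show ?thesis using ij by blast
  next
    case False then have "j < i" using ij by simp
    then show ?thesis using ij by metis
  qed
  then obtain a b where ab: "a < b" "?f a = ?f b" by blast
  have gb: "g [^] b \<in> H #> g [^] a"
    using ab(2) g by (simp add: rcos_self H)
  hence "g [^] b \<otimes> inv (g [^] a) \<in> H"
    using rcos_module_imp[OF G] g by simp
  moreover have "g [^] b = g [^] (b - a) \<otimes> g [^] a"
    using ab(1) g by (simp add: nat_pow_mult)
  hence "g [^] b \<otimes> inv (g [^] a) = g [^] (b - a)"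
    using g by (simp add: m_assoc)
  ultimately show ?thesis using ab(1) by (metis zero_less_diff)
qed

theorem lemma2p5:
  fixes G :: "('a, 'b) monoid_scheme" and H :: "'a set"
    and V :: "'v set" and E :: "'v \<Rightarrow> 'v \<Rightarrow> bool" and \<phi> :: "'a \<Rightarrow> 'v \<Rightarrow> 'v" and \<kappa> :: nat
  assumes "group G" and "torsion_free G"
    and "subgroup H G" and "finite (rcosets\<^bsub>G\<^esub> H)"
    and "tree_action G V E \<phi>"
    and "acylindrical \<kappa> (G\<lparr>carrier := H\<rparr>) V E \<phi>"
  shows "acylindrical \<kappa> G V E \<phi>"
  unfolding acylindrical_def
proof (intro allI impI)
  fix p assume p: "edge_path V E p \<and> length p - 1 \<ge> \<kappa> + 1"
  interpret group G by (rule assms(1))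
  interpret ga: group_action G V \<phi> using assms(5) by (simp add: tree_action_def)
  have pV: "set p \<subseteq> V" using p by (simp add: edge_path_def walk_def)
  have HS: "pointwise_stab (G\<lparr>carrier := H\<rparr>) \<phi> p = {\<one>\<^bsub>G\<^esub>}"
    using assms(6) p unfolding acylindrical_def by simp
  have one: "\<forall>v\<in>set p. \<phi> \<one>\<^bsub>G\<^esub> v = v"
  proof
    fix v assume "v \<in> set p"
    hence "v \<in> V" using pV by blast
    thus "\<phi> \<one>\<^bsub>G\<^esub> v = v" using ga.id_eq_one by (metis restrict_apply')
  qed
  show "pointwise_stab G \<phi> p = {\<one>\<^bsub>G\<^esub>}"
  proof
    show "{\<one>\<^bsub>G\<^esub>} \<subseteq> pointwise_stab G \<phi> p"
      using one by (simp add: pointwise_stab_def)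
  next
    show "pointwise_stab G \<phi> p \<subseteq> {\<one>\<^bsub>G\<^esub>}"
    proof
      fix g assume "g \<in> pointwise_stab G \<phi> p"
      hence g: "g \<in> carrier G" and fx: "\<forall>v\<in>set p. \<phi> g v = v"
        by (auto simp: pointwise_stab_def)
      obtain n where n: "n > 0" "g [^]\<^bsub>G\<^esub> (n::nat) \<in> H"
        using power_in_subgroup[OF assms(1) assms(3) assms(4) g] by blast
      have pw: "\<phi> (g [^]\<^bsub>G\<^esub> m) v = v" if "v \<in> set p" for m :: nat and v
      proof (induction m)
        case 0 then show ?case using one that by simp
      next
        case (Suc m)
        have "\<phi> (g [^]\<^bsub>G\<^esub> Suc m) v = \<phi> (g [^]\<^bsub>G\<^esub> m \<otimes>\<^bsub>G\<^esub> g) v" by simp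
        also have "\<dots> = \<phi> (g [^]\<^bsub>G\<^esub> m) (\<phi> g v)"
          using ga.composition_rule g that pV by blast
        also have "\<dots> = v" using fx that Suc by simp
        finally show ?case .
      qed
      have "g [^]\<^bsub>G\<^esub> n \<in> pointwise_stab (G\<lparr>carrier := H\<rparr>) \<phi> p"
        using n pw by (simp add: pointwise_stab_def)
      hence "g [^]\<^bsub>G\<^esub> n = \<one>\<^bsub>G\<^esub>" using HS by simp
      thus "g \<in> {\<one>\<^bsub>G\<^esub>}" using assms(2) g n unfolding torsion_free_def by blast
    qed
  qed
qed

end
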